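(* For every $T\ge1$ and every deterministic online algorithm that posts in each round a two-price mechanism $(p_t,q_t)$ with $p_t\le q_t$, there exists an instance with three sellers and three buyers (costs and values in $[0,1]$) on which the algorithm's cumulative gains-from-trade regret over $T$ rounds is at least $T/4$; in particular it is $\Omega(T)$.
   Context: Two-sided market model: sellers have fixed unknown costs $c_i\in[0,1]$, buyers fixed unknown values $v_j\in[0,1]$. In each round the learner posts prices and observes every trader's accept/reject decision; a seller accepts a price $p$ iff $p\ge c_i$, a buyer accepts a price $q$ iff $q\le v_j$ (ties in favour of accepting). A maximum-cardinality matching between accepting sellers and accepting buyers is formed; the GFT of a matching $M$ is $\sum_{(i,j)\in M}(v_j-c_i)$. Benchmark: $\mathrm{GFT}^\star$, the maximum GFT over all matchings. Round-$t$ regret is $\mathrm{GFT}^\star$ minus the minimum GFT over all maximum-cardinality matchings of the traders accepting in round $t$; cumulative regret is the sum over rounds. A two-price mechanism posts a price $p$ to all sellers and a price $q$ to all buyers, with weak budget balance $p\le q$. *)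

theory Defs
  imports Main "HOL.Real"
begin

text \<open>Sellers are indexed by positions of the cost list cs, buyers by positions of
the value list vs. A matching between seller set S and buyer set B is a set of
pairs (i,j) in S x B in which each seller and each buyer occurs at most once.\<close>

definition is_matching :: "nat set \<Rightarrow> nat set \<Rightarrow> (nat \<times> nat) set \<Rightarrow> bool" where
  "is_matching S B M \<longleftrightarrow> M \<subseteq> S \<times> B \<and>
     (\<forall>(i,j)\<in>M. \<forall>(i',j')\<in>M. (i = i' \<longleftrightarrow> j = j'))"

definition gft :: "real list \<Rightarrow> real list \<Rightarrow> (nat \<times> nat) set \<Rightarrow> real" where
  "gft cs vs M = (\<Sum>(i,j)\<in>M. vs ! j - cs ! i)"

definition opt_gft :: "real list \<Rightarrow> real list \<Rightarrow> real" where
  "opt_gft cs vs = Max (gft cs vs ` {M. is_matching {..<length cs} {..<length vs} M})"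

definition max_card_matchings :: "nat set \<Rightarrow> nat set \<Rightarrow> (nat \<times> nat) set set" where
  "max_card_matchings S B = {M. is_matching S B M \<and>
      (\<forall>M'. is_matching S B M' \<longrightarrow> card M' \<le> card M)}"

definition accepting_sellers :: "real list \<Rightarrow> real \<Rightarrow> nat set" where
  "accepting_sellers cs p = {i. i < length cs \<and> cs ! i \<le> p}"

definition accepting_buyers :: "real list \<Rightarrow> real \<Rightarrow> nat set" where
  "accepting_buyers vs q = {j. j < length vs \<and> q \<le> vs ! j}"

definition round_gft :: "real list \<Rightarrow> real list \<Rightarrow> real \<Rightarrow> real \<Rightarrow> real" where
  "round_gft cs vs p q = Min (gft cs vs `
      max_card_matchings (accepting_sellers cs p) (accepting_buyers vs q))"

definition round_regret :: "real list \<Rightarrow> real list \<Rightarrow> real \<Rightarrow> real \<Rightarrow> real" where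
  "round_regret cs vs p q = opt_gft cs vs - round_gft cs vs p q"

type_synonym feedback = "bool list \<times> bool list"

definition feedback_of :: "real list \<Rightarrow> real list \<Rightarrow> real \<times> real \<Rightarrow> feedback" where
  "feedback_of cs vs pq = (map (\<lambda>c. c \<le> fst pq) cs, map (\<lambda>v. snd pq \<le> v) vs)"

type_synonym algorithm = "feedback list \<Rightarrow> real \<times> real"

fun history :: "algorithm \<Rightarrow> real list \<Rightarrow> real list \<Rightarrow> nat \<Rightarrow> feedback list" where
  "history A cs vs 0 = []"
| "history A cs vs (Suc t) = history A cs vs t @ [feedback_of cs vs (A (history A cs vs t))]"

definition prices :: "algorithm \<Rightarrow> real list \<Rightarrow> real list \<Rightarrow> nat \<Rightarrow> real \<times> real" where
  "prices A cs vs t = A (history A cs vs t)"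

definition cumulative_regret :: "algorithm \<Rightarrow> real list \<Rightarrow> real list \<Rightarrow> nat \<Rightarrow> real" where
  "cumulative_regret A cs vs T =
     (\<Sum>t<T. round_regret cs vs (fst (prices A cs vs t)) (snd (prices A cs vs t)))"

end

theory Submission
  imports Defs
begin

lemma matching_card_le:
  assumes "is_matching S B M" "finite S" "finite B"
  shows "card M \<le> card S" "card M \<le> card B"
proof -
  have sub: "M \<subseteq> S \<times> B" and inj: "\<forall>(i,j)\<in>M. \<forall>(i',j')\<in>M. (i = i' \<longleftrightarrow> j = j')"
    using assms(1) unfolding is_matching_def by auto
  have fin: "finite M" using sub assms(2,3) finite_subset by blast
  have "inj_on fst M" unfolding inj_on_def using inj by fastforce
  hence "card (fst ` M) = card M" by (rule card_image)
  moreover have "fst ` M \<subseteq> S" using sub by auto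
  ultimately show "card M \<le> card S" using assms(2) card_mono by metis
  have "inj_on snd M" unfolding inj_on_def using inj by fastforce
  hence "card (snd ` M) = card M" by (rule card_image)
  moreover have "snd ` M \<subseteq> B" using sub by auto
  ultimately show "card M \<le> card B" using assms(3) card_mono by metis
qed

lemma round_gft_le:
  assumes "is_matching (accepting_sellers cs p) (accepting_buyers vs q) M"
    and "card M \<ge> card (accepting_sellers cs p) \<or> card M \<ge> card (accepting_buyers vs q)"
  shows "round_gft cs vs p q \<le> gft cs vs M"
proof -
  let ?S = "accepting_sellers cs p" and ?B = "accepting_buyers vs q"
  have fS: "finite ?S" unfolding accepting_sellers_def by auto
  have fB: "finite ?B" unfolding accepting_buyers_def by auto
  have "M \<in> max_card_matchings ?S ?B"
    unfolding max_card_matchings_def using assms matching_card_le[OF _ fS fB] by fastforce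
  moreover have "finite (max_card_matchings ?S ?B)"
  proof (rule finite_subset)
    show "max_card_matchings ?S ?B \<subseteq> Pow (?S \<times> ?B)"
      unfolding max_card_matchings_def is_matching_def by auto
    show "finite (Pow (?S \<times> ?B))" using fS fB by auto
  qed
  ultimately show ?thesis unfolding round_gft_def by (intro Min_le) auto
qed

definition cs0 :: "real list" where "cs0 = [0,0,1]"
definition vs0 :: "real list" where "vs0 = [1/2,1/2,1]"

lemma lt3: "{i::nat. i < Suc (Suc (Suc 0)) \<and> P i} =
  (if P 0 then {0} else {}) \<union> (if P 1 then {1} else {}) \<union> (if P 2 then {2} else {})"
  by (auto simp: less_Suc_eq numeral_2_eq_2; metis gr0I)

lemma opt_ge: "opt_gft cs0 vs0 \<ge> 3/2"
proof -
  let ?Ms = "{M. is_matching {..<length cs0} {..<length vs0} M}"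
  have fin: "finite ?Ms"
  proof (rule finite_subset)
    show "?Ms \<subseteq> Pow ({..<length cs0} \<times> {..<length vs0})" unfolding is_matching_def by auto
  qed auto
  have mem: "{(0,2),(1,0)} \<in> ?Ms" unfolding is_matching_def cs0_def vs0_def by auto
  have "gft cs0 vs0 {(0,2),(1,0)} = 3/2" unfolding gft_def cs0_def vs0_def by simp
  moreover have "gft cs0 vs0 {(0,2),(1,0)} \<le> opt_gft cs0 vs0"
    unfolding opt_gft_def using fin mem by (intro Max_ge) auto
  ultimately show ?thesis by simp
qed

lemma rg_le:
  assumes "p \<le> q"
  shows "round_gft cs0 vs0 p q \<le> 1"
proof (cases "p < 0")
  case True
  hence "accepting_sellers cs0 p = {}" unfolding accepting_sellers_def cs0_def by (auto simp add: lt3)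
  hence "round_gft cs0 vs0 p q \<le> gft cs0 vs0 {}"
    by (intro round_gft_le) (auto simp: is_matching_def)
  thus ?thesis by (simp add: gft_def)
next
  case np: False
  show ?thesis
  proof (cases "p < 1")
    case p1: True
    hence S: "accepting_sellers cs0 p = {0,1}" using np unfolding accepting_sellers_def cs0_def by (auto simp add: lt3)
    show ?thesis
    proof (cases "q \<le> 1/2")
      case True
      hence B: "accepting_buyers vs0 q = {0,1,2}" unfolding accepting_buyers_def vs0_def by (auto simp add: lt3)
      have "round_gft cs0 vs0 p q \<le> gft cs0 vs0 {(0,0),(1,1)}"
        by (intro round_gft_le) (auto simp: is_matching_def S B)
      thus ?thesis by (simp add: gft_def cs0_def vs0_def)
    next
      case q2: False
      show ?thesis
      proof (cases "q \<le> 1")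
        case True
        hence B: "accepting_buyers vs0 q = {2}" using q2 unfolding accepting_buyers_def vs0_def by (auto simp add: lt3)
        have "round_gft cs0 vs0 p q \<le> gft cs0 vs0 {(0,2)}"
          by (intro round_gft_le) (auto simp: is_matching_def S B)
        thus ?thesis by (simp add: gft_def cs0_def vs0_def)
      next
        case False
        hence B: "accepting_buyers vs0 q = {}" unfolding accepting_buyers_def vs0_def by (auto simp add: lt3)
        have "round_gft cs0 vs0 p q \<le> gft cs0 vs0 {}"
          by (intro round_gft_le) (auto simp: is_matching_def S B)
        thus ?thesis by (simp add: gft_def)
      qed
    qed
  next
    case p1: False
    hence S: "accepting_sellers cs0 p = {0,1,2}" unfolding accepting_sellers_def cs0_def by (auto simp add: lt3)
    show ?thesis
    proof (cases "q \<le> 1")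
      case True
      hence B: "accepting_buyers vs0 q = {2}" using p1 assms unfolding accepting_buyers_def vs0_def by (auto simp add: lt3)
      have "round_gft cs0 vs0 p q \<le> gft cs0 vs0 {(2,2)}"
        by (intro round_gft_le) (auto simp: is_matching_def S B)
      thus ?thesis by (simp add: gft_def cs0_def vs0_def)
    next
      case False
      hence B: "accepting_buyers vs0 q = {}" unfolding accepting_buyers_def vs0_def by (auto simp add: lt3)
      have "round_gft cs0 vs0 p q \<le> gft cs0 vs0 {}"
        by (intro round_gft_le) (auto simp: is_matching_def S B)
      thus ?thesis by (simp add: gft_def)
    qed
  qed
qed

theorem theorem4p4:
  fixes T :: nat and A :: algorithm
  assumes "T \<ge> 1"
    and "\<forall>h. fst (A h) \<le> snd (A h)"
  shows "\<exists>cs vs. length cs = 3 \<and> length vs = 3 \<and>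
           (\<forall>c\<in>set cs. 0 \<le> c \<and> c \<le> 1) \<and> (\<forall>v\<in>set vs. 0 \<le> v \<and> v \<le> 1) \<and>
           cumulative_regret A cs vs T \<ge> real T / 4"
proof (intro exI conjI)
  show "length cs0 = 3" "length vs0 = 3" by (simp_all add: cs0_def vs0_def)
  show "\<forall>c\<in>set cs0. 0 \<le> c \<and> c \<le> 1" "\<forall>v\<in>set vs0. 0 \<le> v \<and> v \<le> 1"
    by (simp_all add: cs0_def vs0_def)
  have each: "round_regret cs0 vs0 (fst (prices A cs0 vs0 t)) (snd (prices A cs0 vs0 t)) \<ge> 1/4" for t
  proof -
    have "fst (prices A cs0 vs0 t) \<le> snd (prices A cs0 vs0 t)"
      using assms(2) unfolding prices_def by blast
    from rg_le[OF this] opt_ge show ?thesis unfolding round_regret_def by linarith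
  qed
  have "(\<Sum>t<T. (1/4::real)) \<le> cumulative_regret A cs0 vs0 T"
    unfolding cumulative_regret_def by (rule sum_mono) (use each in auto)
  thus "cumulative_regret A cs0 vs0 T \<ge> real T / 4" by simp
qed

end
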